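(* Let $m,n\in\mathbb{N}$, let $0<q_{\ell}<1$ for $1\le\ell\le m$, and let $v_{j,\ell}\in\mathbb{C}$ for $1\le j\le n$, $1\le\ell\le m$. Then the $n\times n$ matrix \[ \left(\prod_{\ell=1}^{m}\theta_{3}\left(e^{2\pi i(v_{j,\ell}-\overline{v_{k,\ell}})},\ q_{\ell}\right)\right)_{j,k=1}^{n} \] is positive semidefinite.
   Context: The Jacobi theta function is defined by $\theta_{3}(z,q)=\sum_{n=-\infty}^{\infty}q^{n^{2}}e^{2\pi inv}$ where $z=e^{2\pi iv}$, $v\in\mathbb{C}$, $|q|<1$. A complex matrix $A=(a_{j,k})_{j,k=1}^n$ is positive semidefinite if $\sum_{j,k}a_{j,k}z_j\overline{z_k}\ge0$ for all $z_1,\dots,z_n\in\mathbb{C}$. *)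

theory Defs
  imports "HOL-Analysis.Analysis" "HOL-Library.Complex_Order"
begin

text \<open>Jacobi theta function theta_3(z,q) with z = exp(2 pi i v), written as a function
  of the parameter v: sum over all integers n of q^(n^2) exp(2 pi i n v).\<close>
definition theta3 :: "complex \<Rightarrow> complex \<Rightarrow> complex" where
  "theta3 v q = (\<Sum>\<^sub>\<infinity>n::int. q powi (n^2) * exp (2 * pi * \<i> * of_int n * v))"

definition psd_matrix :: "nat \<Rightarrow> (nat \<Rightarrow> nat \<Rightarrow> complex) \<Rightarrow> bool" where
  "psd_matrix n a \<longleftrightarrow>
     (\<forall>z :: nat \<Rightarrow> complex. (\<Sum>j=1..n. \<Sum>k=1..n. a j k * z j * cnj (z k)) \<ge> 0)"

end

theory Submission
  imports Defs
begin

lemma exp_abs_summable: "(\<lambda>n::int. exp (- real_of_int \<bar>n\<bar>)) summable_on UNIV"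
proof -
  have g: "(\<lambda>k::nat. exp (- real k)) summable_on UNIV"
  proof (rule norm_summable_imp_summable_on)
    have "(\<lambda>k::nat. norm (exp (- real k))) = (\<lambda>k. exp (-1) ^ k)"
      by (auto simp: exp_of_nat_mult[symmetric])
    then show "summable (\<lambda>k::nat. norm (exp (- real k)))"
      by (simp add: summable_geometric)
  qed
  have A: "(\<lambda>n::int. exp (- real_of_int \<bar>n\<bar>)) summable_on range int"
    using g by (subst summable_on_reindex) (auto simp: o_def inj_on_def)
  have B: "(\<lambda>n::int. exp (- real_of_int \<bar>n\<bar>)) summable_on range (\<lambda>k. - int k)"
    using g by (subst summable_on_reindex) (auto simp: o_def inj_on_def)
  have U: "UNIV = range int \<union> range (\<lambda>k. - int k)"
  proof -
    { fix n :: int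
      have "n \<in> range int \<union> range (\<lambda>k. - int k)"
      proof (cases "n \<ge> 0")
        case True then show ?thesis by (auto intro: image_eqI[of _ _ "nat n"])
      next
        case False then show ?thesis by (auto intro!: image_eqI[of _ _ "nat (-n)"])
      qed }
    then show ?thesis by blast
  qed
  show ?thesis using summable_on_union[OF A B] U by simp
qed

lemma quad_bound:
  fixes L b y :: real assumes "L > 0"
  shows "- L * y^2 + b * y \<le> b^2 / (4*L)"
proof -
  have "0 \<le> (2*L*y - b)^2" by simp
  then have "4*L*(- L * y^2 + b * y) \<le> b^2" by (simp add: power2_eq_square algebra_simps)
  then show ?thesis using assms by (simp add: field_simps mult.commute)
qed

lemma theta_summable:
  fixes q :: real and w :: complex
  assumes "0 < q" "q < 1"
  shows "(\<lambda>n::int. complex_of_real q powi (n^2) * exp (2 * pi * \<i> * of_int n * w)) summable_on UNIV"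
proof -
  define L where "L = - ln q"
  have L: "L > 0" using assms by (simp add: L_def)
  define b where "b = 2*pi*\<bar>Im w\<bar> + 1"
  define K where "K = b^2 / (4*L)"
  have bound: "norm (complex_of_real q powi (n^2) * exp (2 * pi * \<i> * of_int n * w)) \<le> exp K * exp (- real_of_int \<bar>n\<bar>)" for n :: int
  proof -
    have "norm (complex_of_real q powi (n^2) * exp (2 * pi * \<i> * of_int n * w))
        = q powi (n^2) * exp (- 2*pi * of_int n * Im w)"
      using assms by (simp add: norm_mult norm_power_int)
    also have "q powi (n^2) = exp (of_int (n^2) * ln q)"
      using assms by (simp add: powr_real_of_int'[symmetric] powr_def)
    also have "exp (of_int (n^2) * ln q) * exp (- 2*pi * of_int n * Im w) = exp (of_int (n^2) * ln q - 2*pi * of_int n * Im w)"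
      by (simp add: exp_diff exp_minus field_simps)
    also have "\<dots> \<le> exp (K - real_of_int \<bar>n\<bar>)"
    proof -
      have sq: "real_of_int (n^2) = (real_of_int \<bar>n\<bar>)^2" by simp
      have "- 2*pi * of_int n * Im w \<le> 2*pi*\<bar>Im w\<bar> * real_of_int \<bar>n\<bar>"
      proof -
        have "- 2*pi * of_int n * Im w \<le> \<bar>2*pi * of_int n * Im w\<bar>" by linarith
        also have "\<dots> = 2*pi*\<bar>Im w\<bar> * real_of_int \<bar>n\<bar>" by (simp add: abs_mult)
        finally show ?thesis .
      qed
      moreover have "- L * (real_of_int \<bar>n\<bar>)^2 + b * real_of_int \<bar>n\<bar> \<le> K"
        unfolding K_def by (rule quad_bound[OF L])
      ultimately show ?thesis unfolding L_def b_def sq by (simp add: algebra_simps)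
    qed
    also have "\<dots> = exp K * exp (- real_of_int \<bar>n\<bar>)" by (simp add: exp_diff exp_minus field_simps)
    finally show ?thesis .
  qed
  have "(\<lambda>n::int. norm (complex_of_real q powi (n^2) * exp (2 * pi * \<i> * of_int n * w))) summable_on UNIV"
    by (rule summable_on_comparison_test[OF summable_on_cmult_right[OF exp_abs_summable]])
       (use bound in auto)
  then show ?thesis by (simp add: summable_on_iff_abs_summable_on_complex)
qed


lemma summable_on_finsum:
  fixes f :: "'i \<Rightarrow> 'a \<Rightarrow> complex"
  assumes "finite I" "\<And>i. i \<in> I \<Longrightarrow> f i summable_on A"
  shows "(\<lambda>x. \<Sum>i\<in>I. f i x) summable_on A \<and> infsum (\<lambda>x. \<Sum>i\<in>I. f i x) A = (\<Sum>i\<in>I. infsum (f i) A)"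
  using assms
proof (induction I rule: finite_induct)
  case empty then show ?case by simp
next
  case (insert i I)
  then have s: "(\<lambda>x. \<Sum>i\<in>I. f i x) summable_on A" "f i summable_on A" by auto
  have "(\<lambda>x. f i x + (\<Sum>i\<in>I. f i x)) summable_on A" by (rule summable_on_add[OF s(2) s(1)])
  moreover have "infsum (\<lambda>x. f i x + (\<Sum>i\<in>I. f i x)) A = infsum (f i) A + infsum (\<lambda>x. \<Sum>i\<in>I. f i x) A"
    by (rule infsum_add[OF s(2) s(1)])
  ultimately show ?case using insert by simp
qed

lemma psd_one: "psd_matrix n (\<lambda>j k. 1)"
  unfolding psd_matrix_def
proof
  fix z :: "nat \<Rightarrow> complex"
  have "(\<Sum>j=1..n. \<Sum>k=1..n. 1 * z j * cnj (z k)) = (\<Sum>j=1..n. z j) * cnj (\<Sum>k=1..n. z k)"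
    by (simp add: sum_product)
  also have "\<dots> \<ge> 0" unfolding complex_mult_cnj by (simp add: less_eq_complex_def)
  finally show "(\<Sum>j=1..n. \<Sum>k=1..n. 1 * z j * cnj (z k)) \<ge> 0" .
qed

lemma schur:
  fixes B :: "nat \<Rightarrow> nat \<Rightarrow> complex" and u :: "nat \<Rightarrow> complex" and q :: real
  assumes B: "psd_matrix n B" and q: "0 < q" "q < 1"
  shows "psd_matrix n (\<lambda>j k. B j k * theta3 (u j - cnj (u k)) (complex_of_real q))"
  unfolding psd_matrix_def
proof
  fix z :: "nat \<Rightarrow> complex"
  define a where "a j t = exp (2 * pi * \<i> * of_int t * u j)" for j and t :: int
  define g where "g j k t = complex_of_real q powi (t^2) * exp (2 * pi * \<i> * of_int t * (u j - cnj (u k)))" for j k and t :: int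
  have g_alt: "g j k t = complex_of_real q powi (t^2) * (a j t * cnj (a k t))" for j k t
    unfolding g_def a_def by (simp add: exp_cnj exp_add[symmetric] algebra_simps)
  have gs: "g j k summable_on UNIV" for j k
    unfolding g_def by (rule theta_summable[OF q])
  have th: "theta3 (u j - cnj (u k)) (complex_of_real q) = infsum (g j k) UNIV" for j k
    unfolding theta3_def g_def ..
  define h where "h j k t = B j k * z j * cnj (z k) * g j k t" for j k t
  have hs: "h j k summable_on UNIV" for j k
    unfolding h_def by (rule summable_on_cmult_right[OF gs])
  have hi: "infsum (h j k) UNIV = B j k * theta3 (u j - cnj (u k)) (complex_of_real q) * z j * cnj (z k)" for j k
    unfolding h_def th by (subst infsum_cmult_right[OF gs]) (simp add: algebra_simps)
  have hks: "(\<lambda>t. \<Sum>k=1..n. h j k t) summable_on UNIV \<and> infsum (\<lambda>t. \<Sum>k=1..n. h j k t) UNIV = (\<Sum>k=1..n. infsum (h j k) UNIV)" for j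
    by (rule summable_on_finsum) (auto intro: hs)
  have hjs: "(\<lambda>t. \<Sum>j=1..n. \<Sum>k=1..n. h j k t) summable_on UNIV \<and> infsum (\<lambda>t. \<Sum>j=1..n. \<Sum>k=1..n. h j k t) UNIV = (\<Sum>j=1..n. infsum (\<lambda>t. \<Sum>k=1..n. h j k t) UNIV)"
    by (rule summable_on_finsum) (use hks in auto)
  have eq: "(\<Sum>j=1..n. \<Sum>k=1..n. B j k * theta3 (u j - cnj (u k)) (complex_of_real q) * z j * cnj (z k))
      = infsum (\<lambda>t. \<Sum>j=1..n. \<Sum>k=1..n. h j k t) UNIV"
    using hjs hks by (simp add: hi)
  have nn: "(\<Sum>j=1..n. \<Sum>k=1..n. h j k t) \<ge> 0" for t
  proof -
    have "(\<Sum>j=1..n. \<Sum>k=1..n. h j k t) = complex_of_real (q powi (t^2)) * (\<Sum>j=1..n. \<Sum>k=1..n. B j k * (z j * a j t) * cnj (z k * a k t))"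
      unfolding h_def g_alt of_real_power_int by (simp add: sum_distrib_left algebra_simps)
    also have "\<dots> \<ge> 0"
    proof (rule mult_nonneg_nonneg)
      show "0 \<le> complex_of_real (q powi (t^2))" using zero_le_power_int[of q "t^2"] q by (simp only: less_eq_complex_def Re_complex_of_real Im_complex_of_real) simp
      show "0 \<le> (\<Sum>j=1..n. \<Sum>k=1..n. B j k * (z j * a j t) * cnj (z k * a k t))"
        using B unfolding psd_matrix_def by (erule_tac x="\<lambda>j. z j * a j t" in allE) simp
    qed
    finally show ?thesis .
  qed
  show "(\<Sum>j=1..n. \<Sum>k=1..n. B j k * theta3 (u j - cnj (u k)) (complex_of_real q) * z j * cnj (z k)) \<ge> 0"
    unfolding eq using hjs nn by (intro infsum_nonneg_complex) auto
qed


lemma main_aux: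
  fixes m n :: nat and q :: "nat \<Rightarrow> real" and v :: "nat \<Rightarrow> nat \<Rightarrow> complex"
  shows "(\<forall>l\<in>{1..m}. 0 < q l \<and> q l < 1) \<Longrightarrow>
    psd_matrix n (\<lambda>j k. \<Prod>l=1..m. theta3 (v j l - cnj (v k l)) (complex_of_real (q l)))"
proof (induction m)
  case 0
  then show ?case using psd_one by simp
next
  case (Suc m)
  then have IH: "psd_matrix n (\<lambda>j k. \<Prod>l=1..m. theta3 (v j l - cnj (v k l)) (complex_of_real (q l)))"
    by auto
  have q: "0 < q (Suc m)" "q (Suc m) < 1" using Suc.prems by auto
  show ?case
    using schur[OF IH q, of "\<lambda>j. v j (Suc m)"] by simp
qed

theorem mainTheorem1:
  fixes m n :: nat and q :: "nat \<Rightarrow> real" and v :: "nat \<Rightarrow> nat \<Rightarrow> complex"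
  assumes "\<forall>l\<in>{1..m}. 0 < q l \<and> q l < 1"
  shows "psd_matrix n (\<lambda>j k. \<Prod>l=1..m. theta3 (v j l - cnj (v k l)) (complex_of_real (q l)))"
  using main_aux assms by blast

end
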